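(* Let $f\colon K\to R$ be a homomorphism of (nonunital) rings, and assume that $KR\subset RK$ in $R$ (for example, $RK=R$). Then (a) any right $R$-module that is t-unital as a right $K$-module is also t-unital as a right $R$-module; (b) any left $R$-module that is c-unital as a left $K$-module is also c-unital as a left $R$-module. In particular, if the ring $R$ is commutative, then (a) and (b) hold for any homomorphism $f$.
   Context: Rings are associative, not necessarily unital; modules are not assumed unital. $KR$ denotes the additive subgroup of $R$ generated by products $f(k)r$, and $RK$ the subgroup generated by $rf(k)$, for $k\in K$, $r\in R$; $R$-modules are $K$-modules via $f$. A right module $N$ over a ring $S$ is t-unital if $N\otimes_S S\to N$, $n\otimes s\mapsto ns$, is an isomorphism; a left $S$-module $P$ is c-unital if $P\to\mathrm{Hom}_S(S,P)$, $p\mapsto(s\mapsto sp)$, is an isomorphism (with $\mathrm{Hom}_S$ denoting left $S$-module homomorphisms). *)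

theory Defs
  imports Main "HOL-Library.Poly_Mapping"
begin

definition ring_hom :: "('k::ring \<Rightarrow> 'r::ring) \<Rightarrow> bool" where
  "ring_hom f \<longleftrightarrow> (\<forall>a b. f (a + b) = f a + f b) \<and> (\<forall>a b. f (a * b) = f a * f b)"

inductive_set subgroup_gen :: "'a::ab_group_add set \<Rightarrow> 'a set" for G where
  zero: "0 \<in> subgroup_gen G"
| gen: "g \<in> G \<Longrightarrow> g \<in> subgroup_gen G"
| diff: "a \<in> subgroup_gen G \<Longrightarrow> b \<in> subgroup_gen G \<Longrightarrow> a - b \<in> subgroup_gen G"

definition KR :: "('k::ring \<Rightarrow> 'r::ring) \<Rightarrow> 'r set" where
  "KR f = subgroup_gen {f k * r | k r. True}"

definition RK :: "('k::ring \<Rightarrow> 'r::ring) \<Rightarrow> 'r set" where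
  "RK f = subgroup_gen {r * f k | r k. True}"

definition right_module :: "('n::ab_group_add \<Rightarrow> 's::ring \<Rightarrow> 'n) \<Rightarrow> bool" where
  "right_module act \<longleftrightarrow>
     (\<forall>n n' s. act (n + n') s = act n s + act n' s) \<and>
     (\<forall>n s s'. act n (s + s') = act n s + act n s') \<and>
     (\<forall>n s s'. act (act n s) s' = act n (s * s'))"

definition left_module :: "('s::ring \<Rightarrow> 'p::ab_group_add \<Rightarrow> 'p) \<Rightarrow> bool" where
  "left_module act \<longleftrightarrow>
     (\<forall>s p p'. act s (p + p') = act s p + act s p') \<and>
     (\<forall>s s' p. act (s + s') p = act s p + act s' p) \<and>
     (\<forall>s s' p. act s (act s' p) = act (s * s') p)"

definition zsmult :: "int \<Rightarrow> 'a::ab_group_add \<Rightarrow> 'a" where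
  "zsmult k x = (if 0 \<le> k then (\<Sum>_<nat k. x) else - (\<Sum>_<nat (- k). x))"

text \<open>Tensor product N \<otimes>_S S, written out: the free abelian group on N \<times> S
  (finitely supported integer-valued functions) modulo the subgroup generated by the
  balanced-bilinearity relations.\<close>
definition tensor_rels :: "('n::ab_group_add \<Rightarrow> 's::ring \<Rightarrow> 'n) \<Rightarrow> (('n \<times> 's) \<Rightarrow>\<^sub>0 int) set" where
  "tensor_rels act =
     {Poly_Mapping.single (n + n', s) 1 - Poly_Mapping.single (n, s) 1 - Poly_Mapping.single (n', s) 1
        | n n' s. True} \<union>
     {Poly_Mapping.single (n, s + s') 1 - Poly_Mapping.single (n, s) 1 - Poly_Mapping.single (n, s') 1
        | n s s'. True} \<union>
     {Poly_Mapping.single (act n s', s) 1 - Poly_Mapping.single (n, s' * s) 1 | n s s'. True}"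

text \<open>The map on formal sums inducing N \<otimes>_S S -> N, n \<otimes> s \<mapsto> n s.\<close>
definition tensor_eval :: "('n::ab_group_add \<Rightarrow> 's::ring \<Rightarrow> 'n) \<Rightarrow> (('n \<times> 's) \<Rightarrow>\<^sub>0 int) \<Rightarrow> 'n" where
  "tensor_eval act x = (\<Sum>q\<in>Poly_Mapping.keys x. zsmult (Poly_Mapping.lookup x q) (act (fst q) (snd q)))"

text \<open>t-unital: the induced map N \<otimes>_S S -> N (from the quotient) is bijective, i.e. the map on
  formal sums is surjective and its kernel is exactly (contained in) the relation subgroup.\<close>
definition t_unital :: "('n::ab_group_add \<Rightarrow> 's::ring \<Rightarrow> 'n) \<Rightarrow> bool" where
  "t_unital act \<longleftrightarrow>
     surj (tensor_eval act) \<and>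
     (\<forall>x. tensor_eval act x = 0 \<longrightarrow> x \<in> subgroup_gen (tensor_rels act))"

definition left_hom_from_ring :: "('s::ring \<Rightarrow> 'p::ab_group_add \<Rightarrow> 'p) \<Rightarrow> ('s \<Rightarrow> 'p) \<Rightarrow> bool" where
  "left_hom_from_ring act g \<longleftrightarrow>
     (\<forall>s t. g (s + t) = g s + g t) \<and> (\<forall>s t. g (s * t) = act s (g t))"

text \<open>c-unital: P -> Hom_S(S,P), p \<mapsto> (s \<mapsto> s p), is bijective.\<close>
definition c_unital :: "('s::ring \<Rightarrow> 'p::ab_group_add \<Rightarrow> 'p) \<Rightarrow> bool" where
  "c_unital act \<longleftrightarrow>
     inj (\<lambda>p. \<lambda>s. act s p) \<and>
     (\<forall>g. left_hom_from_ring act g \<longrightarrow> (\<exists>p. \<forall>s. g s = act s p))"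

end

theory Submission
  imports Defs
begin

lemma sg_add: "a \<in> subgroup_gen G \<Longrightarrow> b \<in> subgroup_gen G \<Longrightarrow> a + b \<in> subgroup_gen G"
proof -
  assume a: "a \<in> subgroup_gen G" and b: "b \<in> subgroup_gen G"
  have "0 - b \<in> subgroup_gen G" using b by (intro subgroup_gen.diff subgroup_gen.zero)
  from subgroup_gen.diff[OF a this] show ?thesis by simp
qed

lemma sg_uminus: "a \<in> subgroup_gen G \<Longrightarrow> - a \<in> subgroup_gen G"
  using subgroup_gen.diff[OF subgroup_gen.zero, of a G] by simp

lemma sg_min:
  assumes "0 \<in> W" "\<And>a b. a \<in> W \<Longrightarrow> b \<in> W \<Longrightarrow> a - b \<in> W" "G \<subseteq> W"
  shows "subgroup_gen G \<subseteq> W"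
proof
  fix x assume "x \<in> subgroup_gen G"
  then show "x \<in> W" by induct (use assms in auto)
qed

lemma zsmult_0 [simp]: "zsmult 0 x = 0"
  by (simp add: zsmult_def)

lemma zsmult_1 [simp]: "zsmult 1 x = x"
  by (simp add: zsmult_def)

lemma zsmult_succ: "zsmult (k + 1) x = zsmult k x + x"
proof (cases "k \<ge> 0")
  case True
  then have "nat (k + 1) = Suc (nat k)" by simp
  then show ?thesis using True by (simp add: zsmult_def)
next
  case False
  then have "nat (- k) = Suc (nat (- (k + 1)))" by simp
  show ?thesis
  proof (cases "k = -1")
    case True
    then show ?thesis by (simp add: zsmult_def)
  next
    case k: False
    have "\<not> 0 \<le> k + 1" using False k by simp
    with False \<open>nat (- k) = Suc (nat (- (k + 1)))\<close> show ?thesis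
      by (simp add: zsmult_def algebra_simps)
  qed
qed

lemma zsmult_add: "zsmult (a + b) x = zsmult a x + zsmult b x"
proof (induction b rule: int_induct[where k = 0])
  case base
  then show ?case by simp
next
  case (step1 i)
  then show ?case using zsmult_succ[of "a + i" x] zsmult_succ[of i x]
    by (simp add: add.assoc[symmetric])
next
  case (step2 i)
  then show ?case using zsmult_succ[of "a + i - 1" x] zsmult_succ[of "i - 1" x]
    by (simp add: algebra_simps)
qed

lemma tensor_eval_add: "tensor_eval act (x + y) = tensor_eval act x + tensor_eval act y"
  unfolding tensor_eval_def
  by (rule setsum_keys_plus_distrib) (auto simp: zsmult_add)

lemma tensor_eval_0 [simp]: "tensor_eval act 0 = 0"
  by (simp add: tensor_eval_def)

lemma tensor_eval_diff: "tensor_eval act (x - y) = tensor_eval act x - tensor_eval act y"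
  using tensor_eval_add[of act "x - y" y] by (simp add: algebra_simps)

lemma tensor_eval_single [simp]: "tensor_eval act (frag_of q) = act (fst q) (snd q)"
  by (simp add: tensor_eval_def)


lemma tensor_eval_rels:
  assumes "right_module act" and "x \<in> subgroup_gen (tensor_rels act)"
  shows "tensor_eval act x = 0"
proof -
  have "subgroup_gen (tensor_rels act) \<subseteq> {x. tensor_eval act x = 0}"
  proof (rule sg_min)
    show "tensor_rels act \<subseteq> {x. tensor_eval act x = 0}"
      using assms(1) unfolding tensor_rels_def right_module_def
      by (auto simp: tensor_eval_diff)
  qed (auto simp: tensor_eval_diff)
  with assms(2) show ?thesis by blast
qed

lemma part_a:
  fixes f :: "'k::ring \<Rightarrow> 'r::ring" and act :: "'n::ab_group_add \<Rightarrow> 'r \<Rightarrow> 'n"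
  assumes hom: "ring_hom f" and KR: "KR f \<subseteq> RK f" and md: "right_module act"
    and tu: "t_unital (\<lambda>n k. act n (f k))"
  shows "t_unital act"
proof -
  define actK where "actK = (\<lambda>n k. act n (f k))"
  define SR where "SR = subgroup_gen (tensor_rels act)"
  define SK where "SK = subgroup_gen (tensor_rels actK)"
  define \<phi> :: "('n \<times> 'k \<Rightarrow>\<^sub>0 int) \<Rightarrow> ('n \<times> 'r \<Rightarrow>\<^sub>0 int)" where "\<phi> = frag_extend (\<lambda>q. frag_of (fst q, f (snd q)))"
  have fadd: "f (a + b) = f a + f b" and fmul: "f (a * b) = f a * f b" for a b
    using hom by (auto simp: ring_hom_def)
  have mod1: "act (n + n') s = act n s + act n' s" and mod3: "act (act n s) s' = act n (s * s')"
    for n n' s s' using md by (auto simp: right_module_def)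
  have surjK: "surj (tensor_eval actK)" and kerK: "\<And>x. tensor_eval actK x = 0 \<Longrightarrow> x \<in> SK"
    using tu by (auto simp: t_unital_def actK_def SK_def)
  have phi_of [simp]: "\<phi> (frag_of q) = frag_of (fst q, f (snd q))" for q
    by (simp add: \<phi>_def)
  have phi_diff: "\<phi> (a - b) = \<phi> a - \<phi> b" for a b
    by (simp add: \<phi>_def frag_extend_diff)
  have phi_0 [simp]: "\<phi> 0 = 0" by (simp add: \<phi>_def)
  have eval_phi: "tensor_eval act (\<phi> z) = tensor_eval actK z" for z
  using subset_UNIV proof (induction z rule: frag_induction)
    case diff
    then show ?case by (simp add: phi_diff tensor_eval_diff)
  qed (auto simp: actK_def)
  have SR_add: "a \<in> SR \<Longrightarrow> b \<in> SR \<Longrightarrow> a + b \<in> SR" for a b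
    unfolding SR_def by (rule sg_add)
  have SR_diff: "a \<in> SR \<Longrightarrow> b \<in> SR \<Longrightarrow> a - b \<in> SR" for a b
    unfolding SR_def by (rule subgroup_gen.diff)
  have SR_uminus: "a \<in> SR \<Longrightarrow> - a \<in> SR" for a
    unfolding SR_def by (rule sg_uminus)
  have SR_gen: "a \<in> tensor_rels act \<Longrightarrow> a \<in> SR" for a
    unfolding SR_def by (rule subgroup_gen.gen)
  have rel1: "frag_of (n + n', s) - frag_of (n, s) - frag_of (n', s) \<in> SR" for n n' s
    by (rule SR_gen) (unfold tensor_rels_def, blast)
  have rel2: "frag_of (n, s + s') - frag_of (n, s) - frag_of (n, s') \<in> SR" for n s s'
    by (rule SR_gen) (unfold tensor_rels_def, blast)
  have rel3: "frag_of (act n s', s) - frag_of (n, s' * s) \<in> SR" for n s s'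
    by (rule SR_gen) (unfold tensor_rels_def, blast)
  define Y where "Y = {x. \<exists>y. x - \<phi> y \<in> SR}"
  have SR_0: "0 \<in> SR" by (simp add: SR_def subgroup_gen.zero)
  have Y_SR: "a \<in> SR \<Longrightarrow> a \<in> Y" for a
  proof -
    assume "a \<in> SR"
    then have "a - \<phi> 0 \<in> SR" by simp
    then show "a \<in> Y" unfolding Y_def by blast
  qed
  have Y_0: "0 \<in> Y" using Y_SR SR_0 .
  have Y_phi: "\<phi> y \<in> Y" for y
  proof -
    have "\<phi> y - \<phi> y \<in> SR" using SR_0 by simp
    then show ?thesis unfolding Y_def by blast
  qed
  have Y_diff: "a \<in> Y \<Longrightarrow> b \<in> Y \<Longrightarrow> a - b \<in> Y" for a b
  proof -
    assume "a \<in> Y" "b \<in> Y"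
    then obtain ya yb where "a - \<phi> ya \<in> SR" "b - \<phi> yb \<in> SR" unfolding Y_def by blast
    from SR_diff[OF this] have "(a - b) - \<phi> (ya - yb) \<in> SR" by (simp add: phi_diff algebra_simps)
    then show "a - b \<in> Y" unfolding Y_def by blast
  qed
  have Y_add: "a \<in> Y \<Longrightarrow> b \<in> Y \<Longrightarrow> a + b \<in> Y" for a b
    using Y_diff[OF _ Y_diff[OF Y_0], of a b] by simp
  have V: "frag_of (m, t) \<in> Y" if "t \<in> RK f" for m t
  proof -
    have "RK f \<subseteq> {t. frag_of (m, t) \<in> Y}"
      unfolding RK_def
    proof (rule sg_min)
      have "- (frag_of (m, 0 + 0) - frag_of (m, 0) - frag_of (m, 0)) \<in> SR"
        by (rule SR_uminus[OF rel2])
      then show "0 \<in> {t. frag_of (m, t) \<in> Y}" by (simp add: Y_SR)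
    next
      fix a b assume ab: "a \<in> {t. frag_of (m, t) \<in> Y}" "b \<in> {t. frag_of (m, t) \<in> Y}"
      have "frag_of (m, a) - frag_of (m, b) - (frag_of (m, (a - b) + b) - frag_of (m, a - b) - frag_of (m, b)) \<in> Y"
        by (rule Y_diff[OF Y_diff Y_SR[OF rel2]]) (use ab in simp_all)
      then show "a - b \<in> {t. frag_of (m, t) \<in> Y}" by simp
    next
      show "{r * f k |r k. True} \<subseteq> {t. frag_of (m, t) \<in> Y}"
      proof clarify
        fix r k
        have "\<phi> (frag_of (act m r, k)) - (frag_of (act m r, f k) - frag_of (m, r * f k)) \<in> Y"
          by (rule Y_diff[OF Y_phi Y_SR[OF rel3]])
        then show "frag_of (m, r * f k) \<in> Y" by simp
      qed
    qed
    with that show ?thesis by blast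
  qed
  have Wgen: "frag_of (act m (f k), r) \<in> Y" for m k r
  proof -
    have "f k * r \<in> KR f" unfolding KR_def by (rule subgroup_gen.gen) blast
    with KR have "frag_of (m, f k * r) \<in> Y" using V by blast
    then have "frag_of (m, f k * r) + (frag_of (act m (f k), r) - frag_of (m, f k * r)) \<in> Y"
      by (rule Y_add[OF _ Y_SR[OF rel3]])
    then show ?thesis by simp
  qed
  have W: "frag_of (n, r) \<in> Y" for n r
  proof -
    obtain z where z: "n = tensor_eval actK z" using surjK by (metis surjD)
    have "frag_of (tensor_eval actK z, r) \<in> Y"
    using subset_UNIV proof (induction z rule: frag_induction)
      case zero
      have "- (frag_of (0 + 0, r) - frag_of (0, r) - frag_of (0, r)) \<in> SR"
        by (rule SR_uminus[OF rel1])
      then show ?case by (simp add: Y_SR)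
    next
      case (one x)
      then show ?case using Wgen by (simp add: actK_def)
    next
      case (diff a b)
      let ?a = "tensor_eval actK a" and ?b = "tensor_eval actK b"
      have "frag_of (?a, r) - frag_of (?b, r) - (frag_of ((?a - ?b) + ?b, r) - frag_of (?a - ?b, r) - frag_of (?b, r)) \<in> Y"
        by (rule Y_diff[OF Y_diff Y_SR[OF rel1]]) (use diff in simp_all)
      then show ?case by (simp add: tensor_eval_diff)
    qed
    with z show ?thesis by simp
  qed
  have allY: "x \<in> Y" for x
    using subset_UNIV by (induction x rule: frag_induction) (use Y_0 W Y_diff in auto)
  have phiSK: "\<phi> y \<in> SR" if "y \<in> SK" for y
  proof -
    have "SK \<subseteq> {y. \<phi> y \<in> SR}"
      unfolding SK_def
    proof (rule sg_min)
      show "0 \<in> {y. \<phi> y \<in> SR}" by (simp add: SR_def subgroup_gen.zero)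
    next
      fix a b assume "a \<in> {y. \<phi> y \<in> SR}" "b \<in> {y. \<phi> y \<in> SR}"
      then show "a - b \<in> {y. \<phi> y \<in> SR}" by (simp add: phi_diff SR_diff)
    next
      show "tensor_rels actK \<subseteq> {y. \<phi> y \<in> SR}"
        unfolding tensor_rels_def
        by (auto simp: phi_diff fadd fmul actK_def rel1 rel2 rel3)
    qed
    with that show ?thesis by blast
  qed
  show ?thesis
    unfolding t_unital_def
  proof (intro conjI allI impI)
    show "surj (tensor_eval act)"
      unfolding surj_def
    proof
      fix n
      obtain z where "n = tensor_eval actK z" using surjK by (metis surjD)
      then have "n = tensor_eval act (\<phi> z)" by (simp add: eval_phi)
      then show "\<exists>x. n = tensor_eval act x" by blast
    qed
  next
    fix x assume x0: "tensor_eval act x = 0"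
    obtain y where y: "x - \<phi> y \<in> SR" using allY[of x] unfolding Y_def by blast
    have "tensor_eval act (x - \<phi> y) = 0"
      using tensor_eval_rels[OF md] y by (simp add: SR_def)
    then have "tensor_eval actK y = 0" using x0 by (simp add: tensor_eval_diff eval_phi)
    then have "\<phi> y \<in> SR" using kerK phiSK by blast
    from SR_add[OF y this] show "x \<in> subgroup_gen (tensor_rels act)" by (simp add: SR_def)
  qed
qed


lemma additive_diff:
  fixes h :: "'a::ab_group_add \<Rightarrow> 'b::ab_group_add"
  assumes "\<And>a b. h (a + b) = h a + h b"
  shows "h (a - b) = h a - h b"
  using assms[of "a - b" b] by (simp add: algebra_simps)

lemma part_b:
  fixes f :: "'k::ring \<Rightarrow> 'r::ring" and act :: "'r \<Rightarrow> 'p::ab_group_add \<Rightarrow> 'p"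
  assumes hom: "ring_hom f" and KR: "KR f \<subseteq> RK f" and md: "left_module act"
    and cu: "c_unital (\<lambda>k p. act (f k) p)"
  shows "c_unital act"
proof -
  have fadd: "f (a + b) = f a + f b" and fmul: "f (a * b) = f a * f b" for a b
    using hom by (auto simp: ring_hom_def)
  have la1: "act s (p + p') = act s p + act s p'" and la2: "act (s + s') p = act s p + act s' p"
    and la3: "act s (act s' p) = act (s * s') p" for s s' p p'
    using md by (auto simp: left_module_def)
  have act_diff: "act s (p - p') = act s p - act s p'" for s p p'
    by (rule additive_diff[where h="act s"]) (rule la1)
  have act_0: "act s 0 = 0" for s using act_diff[of s 0 0] by simp
  have injK: "inj (\<lambda>p k. act (f k) p)"
    and surjK: "\<And>g. left_hom_from_ring (\<lambda>k p. act (f k) p) g \<Longrightarrow> \<exists>p. \<forall>s. g s = act (f s) p"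
    using cu by (auto simp: c_unital_def)
  show ?thesis
    unfolding c_unital_def
  proof (intro conjI allI impI)
    show "inj (\<lambda>p s. act s p)"
    proof (rule injI)
      fix p p' assume "(\<lambda>s. act s p) = (\<lambda>s. act s p')"
      then have "(\<lambda>k. act (f k) p) = (\<lambda>k. act (f k) p')" by metis
      then show "p = p'" using injK by (simp add: inj_def)
    qed
  next
    fix g assume g: "left_hom_from_ring act g"
    have gadd: "g (s + t) = g s + g t" and gmul: "g (s * t) = act s (g t)" for s t
      using g by (auto simp: left_hom_from_ring_def)
    have "left_hom_from_ring (\<lambda>k p. act (f k) p) (\<lambda>k. g (f k))"
      unfolding left_hom_from_ring_def by (simp add: fadd fmul gadd gmul)
    then obtain p where p: "\<And>k. g (f k) = act (f k) p" using surjK by blast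
    define h where "h r = g r - act r p" for r
    have hadd: "h (a + b) = h a + h b" for a b
      by (simp add: h_def gadd la2 algebra_simps)
    have hmul: "h (s * t) = act s (h t)" for s t
      by (simp add: h_def gmul la3[symmetric] act_diff)
    have hdiff: "h (a - b) = h a - h b" for a b by (rule additive_diff) (rule hadd)
    have hfk: "h (f k) = 0" for k by (simp add: h_def p)
    have "RK f \<subseteq> {t. h t = 0}"
      unfolding RK_def
    proof (rule sg_min)
      show "0 \<in> {t. h t = 0}" using hdiff[of 0 0] by simp
    next
      fix a b assume "a \<in> {t. h t = 0}" "b \<in> {t. h t = 0}"
      then show "a - b \<in> {t. h t = 0}" by (simp add: hdiff)
    next
      show "{r * f k |r k. True} \<subseteq> {t. h t = 0}"
        by (auto simp: hmul hfk act_0)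
    qed
    have "h r = 0" for r
    proof -
      have "act (f k) (h r) = act (f k) 0" for k
      proof -
        have "f k * r \<in> KR f" unfolding KR_def by (rule subgroup_gen.gen) blast
        with KR \<open>RK f \<subseteq> {t. h t = 0}\<close> have "h (f k * r) = 0" by blast
        then show ?thesis by (simp add: hmul act_0)
      qed
      then have "(\<lambda>k. act (f k) (h r)) = (\<lambda>k. act (f k) 0)" by simp
      then show "h r = 0" using injK by (simp add: inj_def)
    qed
    then show "\<exists>p. \<forall>s. g s = act s p" unfolding h_def by (intro exI[of _ p]) simp
  qed
qed

lemma KR_comm:
  assumes "\<forall>a b :: 'r::ring. a * b = b * a"
  shows "KR (f :: 'k::ring \<Rightarrow> 'r) \<subseteq> RK f"
proof -
  have "{f k * r | k r. True} = {r * f k | r k. True}" using assms by metis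
  then show ?thesis unfolding KR_def RK_def by simp
qed

theorem proposition9p6:
  fixes f :: "'k::ring \<Rightarrow> 'r::ring"
  assumes "ring_hom f"
    and "KR f \<subseteq> RK f \<or> (\<forall>a b :: 'r. a * b = b * a)"
  shows "(\<forall>act :: 'n::ab_group_add \<Rightarrow> 'r \<Rightarrow> 'n.
            right_module act \<and> t_unital (\<lambda>n k. act n (f k)) \<longrightarrow> t_unital act)
       \<and> (\<forall>act :: 'r \<Rightarrow> 'p::ab_group_add \<Rightarrow> 'p.
            left_module act \<and> c_unital (\<lambda>k p. act (f k) p) \<longrightarrow> c_unital act)"
proof -
  have KR: "KR f \<subseteq> RK f" using assms(2) KR_comm by blast
  show ?thesis using part_a[OF assms(1) KR] part_b[OF assms(1) KR] by blast
qed

end
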